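(* Let $P$ be a connected shrub on a finite set $I$ with at least two elements, and let $a\neq a'$ be two vertices of height $0$ in $P$. Then there exists a vertex $b$ covering both $a$ and $a'$.
   Context: A shrub $P$ on a finite set $I$ is a set $E$ of edges (unordered pairs $\{i,j\}$ of distinct elements of $I$) together with a height function $h_P:I\to\mathbb{N}$. Say that $j$ covers $i$ if $\{i,j\}\in E$ and $h_P(j)=h_P(i)+1$. The axioms are: (1) if $\{i,j\}\in E$ then $h_P(i)=h_P(j)\pm 1$; (2) if $h_P(j)>0$ then there is an edge $\{i,j\}$ with $h_P(i)=h_P(j)-1$; (3) there are no four distinct vertices $a,b,c,d$ such that $a$ covers $b$ and $c$, $c$ covers $d$, and $\{b,d\}\notin E$; (4) there are no five distinct vertices $a,b,c,d,e$ such that $a$ covers $c$ and $d$, $b$ covers $d$ and $e$, $\{a,e\}\notin E$ and $\{b,c\}\notin E$. A shrub is connected if its underlying graph $(I,E)$ is connected. *)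

theory Defs
  imports Main
begin

definition covers :: "'a set set \<Rightarrow> ('a \<Rightarrow> nat) \<Rightarrow> 'a \<Rightarrow> 'a \<Rightarrow> bool" where
  "covers E h j i \<longleftrightarrow> {i, j} \<in> E \<and> h j = h i + 1"

definition shrub :: "'a set \<Rightarrow> 'a set set \<Rightarrow> ('a \<Rightarrow> nat) \<Rightarrow> bool" where
  "shrub I E h \<longleftrightarrow>
     finite I \<and>
     E \<subseteq> {{i, j} | i j. i \<in> I \<and> j \<in> I \<and> i \<noteq> j} \<and>
     (\<forall>i j. {i, j} \<in> E \<longrightarrow> h i = h j + 1 \<or> h j = h i + 1) \<and>
     (\<forall>j\<in>I. h j > 0 \<longrightarrow> (\<exists>i. {i, j} \<in> E \<and> h i + 1 = h j)) \<and>
     \<not> (\<exists>a b c d. a \<in> I \<and> b \<in> I \<and> c \<in> I \<and> d \<in> I \<and> distinct [a, b, c, d] \<and>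
          covers E h a b \<and> covers E h a c \<and> covers E h c d \<and> {b, d} \<notin> E) \<and>
     \<not> (\<exists>a b c d e. a \<in> I \<and> b \<in> I \<and> c \<in> I \<and> d \<in> I \<and> e \<in> I \<and>
          distinct [a, b, c, d, e] \<and>
          covers E h a c \<and> covers E h a d \<and> covers E h b d \<and> covers E h b e \<and>
          {a, e} \<notin> E \<and> {b, c} \<notin> E)"

definition shrub_connected :: "'a set \<Rightarrow> 'a set set \<Rightarrow> bool" where
  "shrub_connected I E \<longleftrightarrow>
     (\<forall>i\<in>I. \<forall>j\<in>I. (i, j) \<in> {(x, y). {x, y} \<in> E}\<^sup>*)"

end

theory Submission
  imports Defs
begin

definition sm :: "'a set \<Rightarrow> 'a set set \<Rightarrow> ('a \<Rightarrow> nat) \<Rightarrow> 'a \<Rightarrow> 'a \<Rightarrow> bool" where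
  "sm I E h x y \<longleftrightarrow> x = y \<or> (\<exists>b\<in>I. covers E h b x \<and> covers E h b y)"

context
  fixes I :: "'a set" and E :: "'a set set" and h :: "'a \<Rightarrow> nat"
  assumes S: "shrub I E h"
begin

lemma edgeI: "{i, j} \<in> E \<Longrightarrow> i \<in> I \<and> j \<in> I \<and> i \<noteq> j"
proof -
  assume e: "{i, j} \<in> E"
  then obtain p q where "{i,j} = {p,q}" "p \<in> I" "q \<in> I" "p \<noteq> q"
    using S unfolding shrub_def by blast
  then show ?thesis by (metis doubleton_eq_iff insert_absorb2 singleton_insert_inj_eq)
qed

lemma covI: "covers E h b x \<Longrightarrow> b \<in> I \<and> x \<in> I"
  unfolding covers_def using edgeI by blast

definition R where "R = {(u, w). covers E h u w}"

lemma desc_le: "(u, w) \<in> R\<^sup>* \<Longrightarrow> h w \<le> h u \<and> (h w = h u \<longrightarrow> w = u)"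
proof (induction rule: rtrancl_induct)
  case base then show ?case by simp
next
  case (step y z) then show ?case unfolding R_def covers_def by auto
qed

lemma desc_I: "(u, w) \<in> R\<^sup>* \<Longrightarrow> u \<in> I \<Longrightarrow> w \<in> I"
proof (induction rule: rtrancl_induct)
  case base then show ?case by simp
next
  case (step y z) then show ?case unfolding R_def using covI by auto
qed

lemma has_child: "c \<in> I \<Longrightarrow> h c > 0 \<Longrightarrow> \<exists>d. covers E h c d"
proof -
  assume "c \<in> I" "h c > 0"
  then obtain i where "{i, c} \<in> E" "h i + 1 = h c" using S unfolding shrub_def by blast
  then show ?thesis unfolding covers_def by (metis insert_commute)
qed

lemma desc0: "\<forall>v. v \<in> I \<longrightarrow> h v = n \<longrightarrow> (\<exists>x. h x = 0 \<and> (v, x) \<in> R\<^sup>*)"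
proof (induction n)
  case 0 then show ?case by blast
next
  case (Suc n)
  show ?case
  proof (intro allI impI)
    fix v assume v: "v \<in> I" "h v = Suc n"
    then obtain d where d: "covers E h v d" using has_child by fastforce
    then have "d \<in> I" "h d = n" using covI v unfolding covers_def by auto
    then obtain x where "h x = 0" "(d, x) \<in> R\<^sup>*" using Suc by blast
    moreover have "(v, d) \<in> R" using d unfolding R_def by simp
    ultimately show "\<exists>x. h x = 0 \<and> (v, x) \<in> R\<^sup>*" by (meson converse_rtrancl_into_rtrancl)
  qed
qed

lemma sm_trans:
  assumes "x \<in> I" "y \<in> I" "z \<in> I" "h x = 0" "h y = 0" "h z = 0"
    "sm I E h x y" "sm I E h y z"
  shows "sm I E h x z"
proof (cases "x = y \<or> y = z \<or> x = z")
  case True then show ?thesis using assms unfolding sm_def by auto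
next
  case False
  then obtain b b' where b: "b \<in> I" "covers E h b x" "covers E h b y"
    and b': "b' \<in> I" "covers E h b' y" "covers E h b' z"
    using assms unfolding sm_def by auto
  show ?thesis
  proof (cases "b = b'")
    case True then show ?thesis using b b' unfolding sm_def by auto
  next
    case ne: False
    have hb: "h b = 1" "h b' = 1" using b b' assms unfolding covers_def by auto
    have "distinct [b, b', x, y, z]" using ne False hb assms by auto
    then have "{b, z} \<in> E \<or> {b', x} \<in> E"
      using S b b' assms unfolding shrub_def by blast
    then have "covers E h b z \<or> covers E h b' x"
      using hb assms unfolding covers_def by (auto simp: insert_commute)
    then show ?thesis using b b' unfolding sm_def by auto
  qed
qed

lemma mainlem: "\<forall>v x y. v \<in> I \<longrightarrow> h v = n \<longrightarrow> (v, x) \<in> R\<^sup>* \<longrightarrow> (v, y) \<in> R\<^sup>*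
   \<longrightarrow> h x = 0 \<longrightarrow> h y = 0 \<longrightarrow> sm I E h x y"
proof (induction n)
  case 0
  then show ?case using desc_le unfolding sm_def by (metis le_zero_eq)
next
  case (Suc m)
  show ?case
  proof (intro allI impI)
    fix v x y assume v: "v \<in> I" "h v = Suc m" and vx: "(v, x) \<in> R\<^sup>*" and vy: "(v, y) \<in> R\<^sup>*"
      and hx: "h x = 0" and hy: "h y = 0"
    have "v \<noteq> x" "v \<noteq> y" using v hx hy by auto
    then obtain c1 c2 where c1: "(v, c1) \<in> R" "(c1, x) \<in> R\<^sup>*" and c2: "(v, c2) \<in> R" "(c2, y) \<in> R\<^sup>*"
      using vx vy by (meson converse_rtranclE)
    have cv1: "covers E h v c1" and cv2: "covers E h v c2" using c1 c2 unfolding R_def by auto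
    have hc: "h c1 = m" "h c2 = m" using cv1 cv2 v unfolding covers_def by auto
    have cI: "c1 \<in> I" "c2 \<in> I" using cv1 cv2 covI by auto
    have xI: "x \<in> I" "y \<in> I" using desc_I vx vy v by auto
    show "sm I E h x y"
    proof (cases "m = 0")
      case True
      then have "c1 = x" "c2 = y" using desc_le[OF c1(2)] desc_le[OF c2(2)] hc hx hy by auto
      then show ?thesis using cv1 cv2 v unfolding sm_def by auto
    next
      case m: False
      show ?thesis
      proof (cases "c1 = c2")
        case True then show ?thesis using Suc.IH cI hc c1 c2 hx hy by blast
      next
        case ne: False
        obtain d where d: "covers E h c2 d" using has_child[of c2] cI hc m by auto
        have hd: "h d + 1 = m" using d hc unfolding covers_def by auto
        have dI: "d \<in> I" using d covI by auto
        have "distinct [v, c1, c2, d]" using ne hd hc v by auto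
        then have "{c1, d} \<in> E" using S v cI dI cv1 cv2 d unfolding shrub_def by blast
        then have d1: "covers E h c1 d" using hd hc unfolding covers_def by (auto simp: insert_commute)
        obtain z where z: "h z = 0" "(d, z) \<in> R\<^sup>*" using desc0 dI by blast
        have zI: "z \<in> I" using desc_I z dI by auto
        have "(c1, z) \<in> R\<^sup>*" "(c2, z) \<in> R\<^sup>*" using d d1 z unfolding R_def
          by (auto intro: converse_rtrancl_into_rtrancl)
        then have "sm I E h x z" "sm I E h z y" using Suc.IH cI hc c1 c2 hx hy z by blast+
        then show ?thesis using sm_trans xI zI hx hy z by blast
      qed
    qed
  qed
qed

lemma path:
  assumes a: "a \<in> I" "h a = 0"
  shows "(a, w) \<in> {(x, y). {x, y} \<in> E}\<^sup>* \<Longrightarrow>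
     w \<in> I \<and> (\<forall>z. (w, z) \<in> R\<^sup>* \<longrightarrow> h z = 0 \<longrightarrow> sm I E h a z)"
proof (induction rule: rtrancl_induct)
  case base
  then show ?case using a desc_le unfolding sm_def by (metis le_zero_eq)
next
  case (step w u)
  then have e: "{w, u} \<in> E" and IH: "w \<in> I" "\<forall>z. (w, z) \<in> R\<^sup>* \<longrightarrow> h z = 0 \<longrightarrow> sm I E h a z" by auto
  have uI: "u \<in> I" using edgeI e by auto
  have "h w = h u + 1 \<or> h u = h w + 1" using S e unfolding shrub_def by blast
  then have "covers E h w u \<or> covers E h u w" using e unfolding covers_def by (auto simp: insert_commute)
  then show ?case
  proof
    assume "covers E h w u"
    then have "(w, u) \<in> R" unfolding R_def by simp
    then show ?case using IH uI by (meson converse_rtrancl_into_rtrancl)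
  next
    assume cu: "covers E h u w"
    then have uw: "(u, w) \<in> R" unfolding R_def by simp
    obtain z0 where z0: "h z0 = 0" "(w, z0) \<in> R\<^sup>*" using desc0 IH(1) by blast
    have uz0: "(u, z0) \<in> R\<^sup>*" using uw z0 by (meson converse_rtrancl_into_rtrancl)
    have z0I: "z0 \<in> I" using desc_I z0 IH by auto
    show ?case
    proof (intro conjI allI impI uI)
      fix z assume "(u, z) \<in> R\<^sup>*" "h z = 0"
      moreover have "sm I E h z0 z" using mainlem uI uz0 z0 calculation by blast
      moreover have "sm I E h a z0" using IH z0 by blast
      moreover have "z \<in> I" using desc_I calculation uI by auto
      ultimately show "sm I E h a z" using sm_trans a z0I z0 by blast
    qed
  qed
qed

end

theorem mainTheorem4:
  fixes I :: "'a set" and E :: "'a set set" and h :: "'a \<Rightarrow> nat"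
  assumes "shrub I E h"
    and "shrub_connected I E"
    and "card I \<ge> 2"
    and "a \<in> I" and "a' \<in> I" and "a \<noteq> a'"
    and "h a = 0" and "h a' = 0"
  shows "\<exists>b\<in>I. covers E h b a \<and> covers E h b a'"
proof -
  have "(a, a') \<in> {(x, y). {x, y} \<in> E}\<^sup>*" using assms unfolding shrub_connected_def by blast
  then have "sm I E h a a'" using path[OF assms(1) assms(4,7)] assms by blast
  then show ?thesis using assms unfolding sm_def by blast
qed

end
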